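(* Let $B$ be a nonempty barrier of a $3$-connected cubic graph $G$, and let $J$ be an odd component of $G-B$. Then a vertex $v\in V(J)$ is $\lambda$-matchable in $G$ if and only if $v$ is $\lambda$-matchable in the $B$-fragment $G/\overline{V(J)}$.
   Context: A barrier of a graph $G$ with a perfect matching is a set $S\subseteq V(G)$ such that $G-S$ has exactly $|S|$ components of odd order. For an odd component $J$ of $G-B$, the $B$-fragment $G/\overline{V(J)}$ is obtained by shrinking $V(G)-V(J)$ to a single (contraction) vertex. For a vertex $v$ of a cubic graph, a $v$-matching is a spanning subgraph in which $v$ has degree $3$ and every other vertex degree $1$; $v$ is $\lambda$-matchable if a $v$-matching exists. *)

theory Defs
  imports Main
begin

definition multigraph :: "'v set \<Rightarrow> 'e set \<Rightarrow> ('e \<Rightarrow> 'v set) \<Rightarrow> bool" where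
  "multigraph V E ends \<longleftrightarrow> finite V \<and> finite E \<and>
     (\<forall>e\<in>E. ends e \<subseteq> V \<and> card (ends e) = 2)"

definition degree_in :: "'e set \<Rightarrow> ('e \<Rightarrow> 'v set) \<Rightarrow> 'v \<Rightarrow> nat" where
  "degree_in F ends v = card {e\<in>F. v \<in> ends e}"

definition cubic :: "'v set \<Rightarrow> 'e set \<Rightarrow> ('e \<Rightarrow> 'v set) \<Rightarrow> bool" where
  "cubic V E ends \<longleftrightarrow> multigraph V E ends \<and> (\<forall>v\<in>V. degree_in E ends v = 3)"

definition adj_rel :: "'e set \<Rightarrow> ('e \<Rightarrow> 'v set) \<Rightarrow> 'v set \<Rightarrow> ('v \<times> 'v) set" where
  "adj_rel E ends X = {(u, w). u \<in> X \<and> w \<in> X \<and> (\<exists>e\<in>E. ends e = {u, w})}"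

definition components :: "'e set \<Rightarrow> ('e \<Rightarrow> 'v set) \<Rightarrow> 'v set \<Rightarrow> 'v set set" where
  "components E ends X = {{w. (u, w) \<in> (adj_rel E ends X)\<^sup>*} | u. u \<in> X}"

definition connected_graph :: "'v set \<Rightarrow> 'e set \<Rightarrow> ('e \<Rightarrow> 'v set) \<Rightarrow> bool" where
  "connected_graph V E ends \<longleftrightarrow> card (components E ends V) = 1"

definition three_connected :: "'v set \<Rightarrow> 'e set \<Rightarrow> ('e \<Rightarrow> 'v set) \<Rightarrow> bool" where
  "three_connected V E ends \<longleftrightarrow> card V \<ge> 4 \<and>
     (\<forall>X. X \<subseteq> V \<and> card X \<le> 2 \<longrightarrow> connected_graph (V - X) E ends)"

definition perfect_matching :: "'v set \<Rightarrow> 'e set \<Rightarrow> ('e \<Rightarrow> 'v set) \<Rightarrow> 'e set \<Rightarrow> bool" where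
  "perfect_matching V E ends M \<longleftrightarrow> M \<subseteq> E \<and> (\<forall>v\<in>V. degree_in M ends v = 1)"

definition has_perfect_matching :: "'v set \<Rightarrow> 'e set \<Rightarrow> ('e \<Rightarrow> 'v set) \<Rightarrow> bool" where
  "has_perfect_matching V E ends \<longleftrightarrow> (\<exists>M. perfect_matching V E ends M)"

definition odd_components :: "'v set \<Rightarrow> 'e set \<Rightarrow> ('e \<Rightarrow> 'v set) \<Rightarrow> 'v set \<Rightarrow> 'v set set" where
  "odd_components V E ends S = {C \<in> components E ends (V - S). odd (card C)}"

definition barrier :: "'v set \<Rightarrow> 'e set \<Rightarrow> ('e \<Rightarrow> 'v set) \<Rightarrow> 'v set \<Rightarrow> bool" where
  "barrier V E ends S \<longleftrightarrow> S \<subseteq> V \<and> card (odd_components V E ends S) = card S"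

definition v_matching :: "'v set \<Rightarrow> 'e set \<Rightarrow> ('e \<Rightarrow> 'v set) \<Rightarrow> 'v \<Rightarrow> 'e set \<Rightarrow> bool" where
  "v_matching V E ends v F \<longleftrightarrow> F \<subseteq> E \<and>
     (\<forall>w\<in>V. degree_in F ends w = (if w = v then 3 else 1))"

definition lambda_matchable :: "'v set \<Rightarrow> 'e set \<Rightarrow> ('e \<Rightarrow> 'v set) \<Rightarrow> 'v \<Rightarrow> bool" where
  "lambda_matchable V E ends v \<longleftrightarrow> v \<in> V \<and> (\<exists>F. v_matching V E ends v F)"

text \<open>The fragment G / (V - C): vertices of C (as Some x) plus the contraction
  vertex None; edges are those with at least one end in C, with ends outside C
  mapped to None.\<close>
definition frag_V :: "'v set \<Rightarrow> 'v option set" where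
  "frag_V C = Some ` C \<union> {None}"

definition frag_E :: "'e set \<Rightarrow> ('e \<Rightarrow> 'v set) \<Rightarrow> 'v set \<Rightarrow> 'e set" where
  "frag_E E ends C = {e \<in> E. ends e \<inter> C \<noteq> {}}"

definition frag_ends :: "('e \<Rightarrow> 'v set) \<Rightarrow> 'v set \<Rightarrow> 'e \<Rightarrow> 'v option set" where
  "frag_ends ends C e = (\<lambda>x. if x \<in> C then Some x else None) ` ends e"

end

theory Submission
  imports Defs
begin

definition rel_on :: "('v \<times> 'v) set \<Rightarrow> 'v set \<Rightarrow> ('v \<times> 'v) set" where
  "rel_on A X = A \<inter> (X \<times> X)"

definition vcomp :: "('v \<times> 'v) set \<Rightarrow> 'v set \<Rightarrow> 'v \<Rightarrow> 'v set" where
  "vcomp A X u = {w. (u, w) \<in> (rel_on A X)\<^sup>*}"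

definition comps :: "('v \<times> 'v) set \<Rightarrow> 'v set \<Rightarrow> 'v set set" where
  "comps A X = vcomp A X ` X"

definition oc :: "('v \<times> 'v) set \<Rightarrow> 'v set \<Rightarrow> 'v set set" where
  "oc A X = {C \<in> comps A X. odd (card C)}"

lemma comp_self: "u \<in> vcomp A X u"
  by (simp add: vcomp_def)

lemma comp_sub: "u \<in> X \<Longrightarrow> vcomp A X u \<subseteq> X"
proof
  fix w assume u: "u \<in> X" and "w \<in> vcomp A X u"
  then have "(u, w) \<in> (rel_on A X)\<^sup>*" by (simp add: vcomp_def)
  then show "w \<in> X" using u
    by (induction rule: rtrancl_induct) (auto simp: rel_on_def)
qed

lemma sym_rel_on: "sym A \<Longrightarrow> sym (rel_on A X)"
  unfolding rel_on_def sym_def by auto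

lemma comp_sym: "sym A \<Longrightarrow> w \<in> vcomp A X u \<Longrightarrow> u \<in> vcomp A X w"
proof -
  assume a: "sym A" "w \<in> vcomp A X u"
  have "sym ((rel_on A X)\<^sup>*)" using sym_rtrancl[OF sym_rel_on[OF a(1)]] .
  then show ?thesis using a(2) unfolding vcomp_def by (blast dest: symD)
qed

lemma comp_eq: assumes "sym A" "w \<in> vcomp A X u" shows "vcomp A X w = vcomp A X u"
proof -
  have 1: "(u, w) \<in> (rel_on A X)\<^sup>*" "(w, u) \<in> (rel_on A X)\<^sup>*"
    using assms comp_sym[OF assms] by (auto simp: vcomp_def)
  show ?thesis unfolding vcomp_def
    using rtrancl_trans[OF 1(1)] rtrancl_trans[OF 1(2)] by blast
qed

lemma comps_disj:
  assumes "sym A" "C \<in> comps A X" "D \<in> comps A X" "C \<inter> D \<noteq> {}"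
  shows "C = D"
proof -
  obtain u where u: "C = vcomp A X u" using assms(2) by (auto simp: comps_def)
  obtain w where w: "D = vcomp A X w" using assms(3) by (auto simp: comps_def)
  obtain z where z: "z \<in> C" "z \<in> D" using assms(4) by auto
  have "vcomp A X z = vcomp A X u" using comp_eq[OF assms(1), of z X u] z u by simp
  moreover have "vcomp A X z = vcomp A X w" using comp_eq[OF assms(1), of z X w] z w by simp
  ultimately show ?thesis using u w by simp
qed

lemma comp_closed:
  assumes "x \<in> vcomp A X u" "x \<in> X" "y \<in> X" "(x, y) \<in> A"
  shows "y \<in> vcomp A X u"
proof -
  have "(x, y) \<in> rel_on A X" using assms by (simp add: rel_on_def)
  then show ?thesis using assms(1) unfolding vcomp_def
    using rtrancl_into_rtrancl[of u x "rel_on A X" y] by blast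
qed

lemma comps_closed:
  assumes "C \<in> comps A X" "x \<in> C" "y \<in> X" "(x, y) \<in> A"
  shows "y \<in> C"
proof -
  obtain u where u: "u \<in> X" "C = vcomp A X u" using assms(1) unfolding comps_def by blast
  have "x \<in> X" using comp_sub[OF u(1)] u(2) assms(2) by blast
  then show ?thesis using comp_closed[of x A X u y] assms u by simp
qed

lemma comps_sub: "C \<in> comps A X \<Longrightarrow> C \<subseteq> X"
proof -
  assume "C \<in> comps A X"
  then obtain u where "u \<in> X" "C = vcomp A X u" unfolding comps_def by blast
  then show ?thesis using comp_sub[of u X A] by simp
qed

lemma comps_ne: "C \<in> comps A X \<Longrightarrow> C \<noteq> {}"
  unfolding comps_def using comp_self by fast

lemma comp_mono: assumes "X \<subseteq> Y" shows "vcomp A X u \<subseteq> vcomp A Y u"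
proof -
  have "rel_on A X \<subseteq> rel_on A Y" using assms unfolding rel_on_def by auto
  then have "(rel_on A X)\<^sup>* \<subseteq> (rel_on A Y)\<^sup>*" by (rule rtrancl_mono)
  then show ?thesis unfolding vcomp_def by blast
qed

lemma comp_in_sub:
  assumes "vcomp A X u \<subseteq> Y"
  shows "vcomp A X u \<subseteq> vcomp A Y u"
proof
  fix w assume "w \<in> vcomp A X u"
  then have "(u, w) \<in> (rel_on A X)\<^sup>*" by (simp add: vcomp_def)
  then have "(u, w) \<in> (rel_on A Y)\<^sup>*"
  proof (induction rule: rtrancl_induct)
    case base then show ?case by simp
  next
    case (step y z)
    have "y \<in> vcomp A X u" using step(1) by (simp add: vcomp_def)
    moreover have "z \<in> vcomp A X u" using rtrancl_into_rtrancl[OF step(1,2)] by (simp add: vcomp_def)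
    ultimately have "y \<in> Y" "z \<in> Y" using assms by auto
    then have "(y, z) \<in> rel_on A Y" using step(2) by (auto simp: rel_on_def)
    then show ?case using rtrancl_into_rtrancl[OF step(3)] by blast
  qed
  then show "w \<in> vcomp A Y u" by (simp add: vcomp_def)
qed

lemma comp_closed_sub:
  assumes "u \<in> C" "\<forall>y\<in>C. \<forall>z\<in>Y. (y, z) \<in> A \<longrightarrow> z \<in> C"
  shows "vcomp A Y u \<subseteq> C"
proof
  fix w assume "w \<in> vcomp A Y u"
  then have "(u, w) \<in> (rel_on A Y)\<^sup>*" by (simp add: vcomp_def)
  then show "w \<in> C"
  proof (induction rule: rtrancl_induct)
    case base then show ?case using assms(1) .
  next
    case (step y z)
    then show ?case using assms(2) by (auto simp: rel_on_def)
  qed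
qed

lemma comps_sep:
  assumes "sym A" "Y \<inter> Z = {}" "\<forall>y\<in>Y. \<forall>z\<in>Z. (y, z) \<notin> A"
  shows "comps A (Y \<union> Z) = comps A Y \<union> comps A Z"
proof -
  have Z': "\<forall>z\<in>Z. \<forall>y\<in>Y. (z, y) \<notin> A"
  proof (intro ballI notI)
    fix z y assume "z \<in> Z" "y \<in> Y" "(z, y) \<in> A"
    then have "(y, z) \<in> A" using assms(1) by (rule_tac symD) auto
    then show False using assms(3) \<open>z \<in> Z\<close> \<open>y \<in> Y\<close> by blast
  qed
  have a: "vcomp A (Y \<union> Z) u = vcomp A Y u" if "u \<in> Y" for u
  proof -
    have "vcomp A (Y \<union> Z) u \<subseteq> Y"
      by (rule comp_closed_sub) (use that assms(3) in auto)
    then show ?thesis using comp_in_sub[of A "Y \<union> Z" u Y] comp_mono[of Y "Y \<union> Z" A u] by blast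
  qed
  have b: "vcomp A (Y \<union> Z) u = vcomp A Z u" if "u \<in> Z" for u
  proof -
    have "vcomp A (Y \<union> Z) u \<subseteq> Z"
      by (rule comp_closed_sub) (use that Z' in auto)
    then show ?thesis using comp_in_sub[of A "Y \<union> Z" u Z] comp_mono[of Z "Y \<union> Z" A u] by blast
  qed
  show ?thesis unfolding comps_def
  proof (intro equalityI subsetI)
    fix C assume "C \<in> vcomp A (Y \<union> Z) ` (Y \<union> Z)"
    then obtain u where u: "u \<in> Y \<union> Z" "C = vcomp A (Y \<union> Z) u" by blast
    show "C \<in> vcomp A Y ` Y \<union> vcomp A Z ` Z"
    proof (cases "u \<in> Y")
      case True then show ?thesis using u a by blast
    next
      case False then show ?thesis using u b by blast
    qed
  next
    fix C assume "C \<in> vcomp A Y ` Y \<union> vcomp A Z ` Z"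
    then show "C \<in> vcomp A (Y \<union> Z) ` (Y \<union> Z)"
    proof (elim UnE imageE)
      fix u assume "u \<in> Y" "C = vcomp A Y u"
      then show ?thesis using a[of u] by (intro image_eqI[of _ _ u]) auto
    next
      fix u assume "u \<in> Z" "C = vcomp A Z u"
      then show ?thesis using b[of u] by (intro image_eqI[of _ _ u]) auto
    qed
  qed
qed

lemma comps_self:
  assumes "sym A" "C \<in> comps A X"
  shows "comps A C = {C}"
proof -
  have "vcomp A C u = C" if "u \<in> C" for u
  proof -
    obtain w where w: "w \<in> X" "C = vcomp A X w" using assms(2) unfolding comps_def by blast
    have "vcomp A X u = C" using comp_eq[OF assms(1), of u X w] that w by simp
    then show ?thesis using comp_in_sub[of A X u C] comp_mono[of C X A u] comps_sub[OF assms(2)]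
      by blast
  qed
  then have "vcomp A C ` C = (\<lambda>_. C) ` C" by (intro image_cong) simp_all
  then show ?thesis unfolding comps_def using comps_ne[OF assms(2)] by (simp add: image_constant_conv)
qed

lemma comps_split:
  assumes "sym A" "C \<in> comps A X" "T \<subseteq> C"
  shows "comps A (X - T) = comps A (C - T) \<union> comps A (X - C)"
proof -
  have eq: "X - T = (C - T) \<union> (X - C)" using comps_sub[OF assms(2)] assms(3) by auto
  have 1: "\<forall>y\<in>C - T. \<forall>z\<in>X - C. (y, z) \<notin> A"
    using comps_closed[OF assms(2)] by blast
  have 2: "(C - T) \<inter> (X - C) = {}" by blast
  show ?thesis unfolding eq by (rule comps_sep[OF assms(1) 2 1])
qed

lemma comps_disj_sets:
  assumes "Y \<inter> Z = {}"
  shows "comps A Y \<inter> comps A Z = {}"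
proof (rule ccontr)
  assume "comps A Y \<inter> comps A Z \<noteq> {}"
  then obtain C where "C \<in> comps A Y" "C \<in> comps A Z" by blast
  then have "C \<subseteq> Y" "C \<subseteq> Z" "C \<noteq> {}" using comps_sub[of C A Y] comps_sub[of C A Z] comps_ne[of C A Y]
    by blast+
  then show False using assms by blast
qed

lemma finite_comps: "finite X \<Longrightarrow> finite (comps A X)"
  by (simp add: comps_def)

lemma Union_comps: "\<Union> (comps A X) = X"
proof (rule equalityI)
  show "\<Union> (comps A X) \<subseteq> X" using comps_sub by blast
  show "X \<subseteq> \<Union> (comps A X)"
  proof
    fix x assume "x \<in> X"
    then have "vcomp A X x \<in> comps A X" unfolding comps_def by blast
    then show "x \<in> \<Union> (comps A X)" using comp_self[of x A X] by blast
  qed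
qed

lemma card_comps_sum:
  assumes "sym A" "finite X"
  shows "card X = (\<Sum>C\<in>comps A X. card C)"
proof -
  have "card (\<Union> (comps A X)) = (\<Sum>C\<in>comps A X. card C)"
  proof (rule card_Union_disjoint)
    show "pairwise disjnt (comps A X)"
      unfolding pairwise_def disjnt_def
    proof (intro ballI impI)
      fix C D assume "C \<in> comps A X" "D \<in> comps A X" "C \<noteq> D"
      then show "C \<inter> D = {}" using comps_disj[OF assms(1), of C X D] by blast
    qed
    show "finite C" if "C \<in> comps A X" for C
      using comps_sub[OF that] assms(2) by (rule finite_subset)
  qed
  then show ?thesis by (simp add: Union_comps)
qed

lemma parity_oc:
  assumes "sym A" "finite X"
  shows "odd (card X) \<longleftrightarrow> odd (card (oc A X))"
proof -
  let ?K = "comps A X"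
  have fin: "finite ?K" using finite_comps[OF assms(2)] .
  have sub: "oc A X \<subseteq> ?K" unfolding oc_def by blast
  have "card X = (\<Sum>C\<in>oc A X. card C) + (\<Sum>C\<in>?K - oc A X. card C)"
    using card_comps_sum[OF assms] sum.subset_diff[OF sub fin, of card] by simp
  moreover have "even (\<Sum>C\<in>?K - oc A X. card C)"
    by (rule dvd_sum) (auto simp: oc_def)
  moreover have "(\<Sum>C\<in>oc A X. card C) = (\<Sum>C\<in>oc A X. (card C - 1)) + card (oc A X)"
  proof -
    have "(\<Sum>C\<in>oc A X. card C) = (\<Sum>C\<in>oc A X. (card C - 1 + 1))"
      by (rule sum.cong) (auto simp: oc_def odd_pos)
    also have "\<dots> = (\<Sum>C\<in>oc A X. (card C - 1)) + (\<Sum>C\<in>oc A X. 1)"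
      by (rule sum.distrib)
    finally show ?thesis by simp
  qed
  moreover have "even (\<Sum>C\<in>oc A X. (card C - 1))"
    by (rule dvd_sum) (auto simp: oc_def)
  ultimately show ?thesis by auto
qed

lemma oc_split:
  assumes "sym A" "finite X" "C \<in> comps A X" "T \<subseteq> C"
  shows "card (oc A (X - T)) = card (oc A (C - T)) + card (oc A (X - C))"
proof -
  have "oc A (X - T) = oc A (C - T) \<union> oc A (X - C)"
    using comps_split[OF assms(1,3,4)] unfolding oc_def by blast
  moreover have "oc A (C - T) \<inter> oc A (X - C) = {}"
    using comps_disj_sets[of "C - T" "X - C" A] unfolding oc_def by blast
  moreover have fo: "finite (oc A Y)" if "finite Y" for Y
    unfolding oc_def using finite_comps[OF that] by simp
  moreover have "finite (oc A (C - T))" "finite (oc A (X - C))"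
    using assms(2) comps_sub[OF assms(3)] by (auto intro!: fo intro: finite_subset)
  ultimately show ?thesis by (simp add: card_Un_disjoint)
qed

lemma oc_remove:
  assumes "sym A" "finite X" "C \<in> comps A X"
  shows "card (oc A X) = card (oc A (X - C)) + (if odd (card C) then 1 else 0)"
proof -
  have "card (oc A (X - {})) = card (oc A (C - {})) + card (oc A (X - C))"
    using oc_split[OF assms, of "{}"] by simp
  moreover have "oc A C = (if odd (card C) then {C} else {})"
    using comps_self[OF assms(1,3)] unfolding oc_def by auto
  ultimately show ?thesis by auto
qed


lemma hall:
  assumes "finite I" "\<forall>i\<in>I. finite (F i)" "\<forall>K\<subseteq>I. card K \<le> card (\<Union>(F ` K))"
  shows "\<exists>f. inj_on f I \<and> (\<forall>i\<in>I. f i \<in> F i)"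
  using assms
proof (induction "card I" arbitrary: I F rule: less_induct)
  case less
  show ?case
  proof (cases "I = {}")
    case True then show ?thesis by auto
  next
    case False
    have finU: "finite (\<Union>(F ` K))" if "K \<subseteq> I" for K
    proof -
      have "finite K" using that less.prems(1) by (rule finite_subset)
      then show ?thesis using that less.prems(2) by auto
    qed
    show ?thesis
    proof (cases "\<exists>K. K \<subseteq> I \<and> K \<noteq> {} \<and> K \<noteq> I \<and> card (\<Union>(F ` K)) \<le> card K")
      case True
      then obtain K where K: "K \<subseteq> I" "K \<noteq> {}" "K \<noteq> I" "card (\<Union>(F ` K)) \<le> card K" by blast
      define Y where "Y = \<Union>(F ` K)"
      have cY: "card Y = card K" using K(4) less.prems(3) K(1) unfolding Y_def by (simp add: le_antisym)
      have finK: "finite K" using K less.prems(1) finite_subset by blast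
      have "card K < card I" using K less.prems(1) by (meson psubset_card_mono psubsetI)
      then obtain f1 where f1: "inj_on f1 K" "\<forall>i\<in>K. f1 i \<in> F i"
        using less.hyps[of K F] K less.prems finK by auto
      define F2 where "F2 i = F i - Y" for i
      have c2: "card (I - K) < card I"
      proof -
        have "card (I - K) = card I - card K" using finK K(1) by (rule card_Diff_subset)
        moreover have "card K > 0" using finK K(2) by (simp add: card_gt_0_iff)
        moreover have "card K \<le> card I" using less.prems(1) K(1) by (rule card_mono)
        ultimately show ?thesis by linarith
      qed
      have h2: "\<forall>L\<subseteq>I - K. card L \<le> card (\<Union>(F2 ` L))"
      proof (intro allI impI)
        fix L assume L: "L \<subseteq> I - K"
        have e1: "\<Union>(F2 ` L) = \<Union>(F ` L) - Y" unfolding F2_def by auto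
        have e2: "\<Union>(F ` (L \<union> K)) = \<Union>(F ` L) \<union> Y" unfolding Y_def by auto
        have fL: "finite (\<Union>(F ` L))" using L finU by auto
        have fY: "finite Y" unfolding Y_def using K finU by auto
        have LK: "L \<union> K \<subseteq> I" using L K(1) by blast
        have "card (L \<union> K) \<le> card (\<Union>(F ` L) \<union> Y)"
        proof -
          have "card (L \<union> K) \<le> card (\<Union>(F ` (L \<union> K)))" using less.prems(3) LK by blast
          then show ?thesis by (simp only: e2)
        qed
        moreover have "card (L \<union> K) = card L + card K"
        proof (rule card_Un_disjoint)
          show "finite L" using L less.prems(1) finite_subset by blast
          show "finite K" by (rule finK)
          show "L \<inter> K = {}" using L by blast
        qed
        moreover have "card (\<Union>(F ` L) \<union> Y) = card (\<Union>(F ` L) - Y) + card Y"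
        proof -
          have "\<Union>(F ` L) \<union> Y = (\<Union>(F ` L) - Y) \<union> Y" by blast
          moreover have "card ((\<Union>(F ` L) - Y) \<union> Y) = card (\<Union>(F ` L) - Y) + card Y"
            by (rule card_Un_disjoint) (use fL fY in auto)
          ultimately show ?thesis by simp
        qed
        ultimately show "card L \<le> card (\<Union>(F2 ` L))" using e1 cY by simp
      qed
      obtain f2 where f2: "inj_on f2 (I - K)" "\<forall>i\<in>I - K. f2 i \<in> F2 i"
        using less.hyps[OF c2, of F2] h2 less.prems unfolding F2_def by auto
      define f where "f i = (if i \<in> K then f1 i else f2 i)" for i
      have "inj_on f I"
      proof (rule inj_onI)
        fix i j assume ij: "i \<in> I" "j \<in> I" "f i = f j"
        have Y1: "f1 i \<in> Y" if "i \<in> K" for i using f1 that unfolding Y_def by auto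
        have Y2: "f2 i \<notin> Y" if "i \<in> I - K" for i using f2 that unfolding F2_def by auto
        show "i = j"
        proof (cases "i \<in> K"; cases "j \<in> K")
          assume "i \<in> K" "j \<in> K" then show ?thesis using ij f1(1) unfolding f_def by (simp add: inj_on_def)
        next
          assume "i \<in> K" "j \<notin> K" then show ?thesis using ij Y1[of i] Y2[of j] unfolding f_def by simp
        next
          assume "i \<notin> K" "j \<in> K" then show ?thesis using ij Y1[of j] Y2[of i] unfolding f_def by simp
        next
          assume "i \<notin> K" "j \<notin> K" then show ?thesis using ij f2(1) unfolding f_def by (simp add: inj_on_def)
        qed
      qed
      moreover have "\<forall>i\<in>I. f i \<in> F i" using f1 f2 unfolding f_def F2_def by auto
      ultimately show ?thesis by blast
    next
      case False
      then have big: "\<And>K. K \<subseteq> I \<Longrightarrow> K \<noteq> {} \<Longrightarrow> K \<noteq> I \<Longrightarrow> card K < card (\<Union>(F ` K))"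
        by (meson not_le)
      obtain i0 where i0: "i0 \<in> I" using \<open>I \<noteq> {}\<close> by blast
      have "card {i0} \<le> card (\<Union>(F ` {i0}))" using less.prems(3) i0 by blast
      then have "1 \<le> card (F i0)" by simp
      then have "F i0 \<noteq> {}" by auto
      then obtain y where y: "y \<in> F i0" by blast
      define F2 where "F2 i = F i - {y}" for i
      have c2: "card (I - {i0}) < card I" by (rule card_Diff1_less[OF less.prems(1) i0])
      have h2: "\<forall>L\<subseteq>I - {i0}. card L \<le> card (\<Union>(F2 ` L))"
      proof (intro allI impI)
        fix L assume L: "L \<subseteq> I - {i0}"
        show "card L \<le> card (\<Union>(F2 ` L))"
        proof (cases "L = {}")
          case True then show ?thesis by simp
        next
          case False
          have "L \<noteq> I" using L i0 by auto
          then have "card L < card (\<Union>(F ` L))" using big[of L] L False by auto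
          moreover have "\<Union>(F2 ` L) = \<Union>(F ` L) - {y}" unfolding F2_def by auto
          moreover have "finite (\<Union>(F ` L))" using L finU by auto
          moreover have "card (\<Union>(F ` L)) - card {y} \<le> card (\<Union>(F ` L) - {y})"
            by (rule diff_card_le_card_Diff) simp
          ultimately show ?thesis by simp
        qed
      qed
      obtain f2 where f2: "inj_on f2 (I - {i0})" "\<forall>i\<in>I - {i0}. f2 i \<in> F2 i"
        using less.hyps[OF c2, of F2] h2 less.prems unfolding F2_def by auto
      define f where "f = f2(i0 := y)"
      have "inj_on f I"
      proof (rule inj_onI)
        fix i j assume ij: "i \<in> I" "j \<in> I" "f i = f j"
        have "f2 i \<noteq> y" if "i \<in> I - {i0}" for i using f2 that unfolding F2_def by auto
        then show "i = j" using ij f2 unfolding f_def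
          by (cases "i = i0"; cases "j = i0") (auto dest: inj_onD)
      qed
      moreover have "\<forall>i\<in>I. f i \<in> F i" using f2 y unfolding f_def F2_def by auto
      ultimately show ?thesis by blast
    qed
  qed
qed


definition is_pm :: "('v \<times> 'v) set \<Rightarrow> 'v set \<Rightarrow> ('v \<Rightarrow> 'v) \<Rightarrow> bool" where
  "is_pm A V m \<longleftrightarrow> (\<forall>x\<in>V. m x \<in> V \<and> m x \<noteq> x \<and> m (m x) = x \<and> (x, m x) \<in> A)"

definition tutte_cond :: "('v \<times> 'v) set \<Rightarrow> 'v set \<Rightarrow> bool" where
  "tutte_cond A V \<longleftrightarrow> (\<forall>S\<subseteq>V. card (oc A (V - S)) \<le> card S)"

lemma comps_comp_eq:
  assumes "sym A" "C \<in> comps A X" "v \<in> C"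
  shows "vcomp A X v = C"
proof -
  obtain u where u: "u \<in> X" "C = vcomp A X u" using assms(2) unfolding comps_def by blast
  show ?thesis using comp_eq[OF assms(1), of v X u] u assms(3) by simp
qed

lemma finite_oc: "finite X \<Longrightarrow> finite (oc A X)"
  unfolding oc_def using finite_comps[of X A] by simp

theorem tutte:
  assumes "finite V" "sym A" "tutte_cond A V"
  shows "\<exists>m. is_pm A V m"
  using assms
proof (induction "card V" arbitrary: V rule: less_induct)
  case less
  note fin = less.prems(1) and symA = less.prems(2)
  have tc: "card (oc A (V - S)) \<le> card S" if "S \<subseteq> V" for S
    using less.prems(3) that unfolding tutte_cond_def by blast
  show ?case
  proof (cases "V = {}")
    case True then show ?thesis by (intro exI[of _ id]) (simp add: is_pm_def)
  next
    case False
    have "card (oc A (V - {})) \<le> card {}" using tc[of "{}"] by simp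
    then have "card (oc A V) = 0" by simp
    then have evenV: "even (card V)" using parity_oc[OF symA fin] by simp
    obtain x0 where x0: "x0 \<in> V" using False by blast
    define P where "P S \<longleftrightarrow> S \<subseteq> V \<and> card (oc A (V - S)) = card S" for S
    have P1: "P {x0}"
    proof -
      have "card (V - {x0}) = card V - 1" using x0 fin by simp
      moreover have "card V > 0" using x0 fin by (auto simp: card_gt_0_iff)
      ultimately have "odd (card (V - {x0}))" using evenV by simp
      then have "odd (card (oc A (V - {x0})))" using parity_oc[OF symA, of "V - {x0}"] fin by simp
      then have "card (oc A (V - {x0})) \<noteq> 0" by (intro notI) simp
      then have "card (oc A (V - {x0})) \<ge> 1" by simp
      moreover have "card (oc A (V - {x0})) \<le> 1" using tc[of "{x0}"] x0 by simp
      ultimately show ?thesis unfolding P_def using x0 by simp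
    qed
    have "{S. P S} \<subseteq> Pow V" unfolding P_def by blast
    then have finP: "finite {S. P S}" using fin by (simp add: finite_subset)
    define n where "n = Max (card ` {S. P S})"
    have "card ` {S. P S} \<noteq> {}" using P1 by blast
    then have "n \<in> card ` {S. P S}" unfolding n_def using finP by (intro Max_in) simp_all
    then obtain S where PS: "P S" and cS: "card S = n" by blast
    have maxS: "card S' \<le> card S" if "P S'" for S'
    proof -
      have "card S' \<in> card ` {S. P S}" using that by blast
      then show ?thesis unfolding cS n_def using finP by (intro Max_ge) simp_all
    qed
    have SV: "S \<subseteq> V" using PS unfolding P_def by blast
    have finS: "finite S" using finite_subset[OF SV fin] .
    have Sne: "S \<noteq> {}"
    proof
      assume "S = {}" then show False using maxS[OF P1] by simp
    qed
    have ocS: "card (oc A (V - S)) = card S" using PS unfolding P_def by blast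
    define X where "X = V - S"
    have finX: "finite X" unfolding X_def using fin by simp
    have nobig: False if "S' \<subseteq> V" "card S' > card S" "card (oc A (V - S')) \<ge> card S'" for S'
    proof -
      have "card (oc A (V - S')) = card S'" using that(3) tc[OF that(1)] by simp
      then have "P S'" unfolding P_def using that(1) by simp
      then show False using maxS[of S'] that(2) by simp
    qed
    have allodd: "odd (card C)" if C: "C \<in> comps A X" for C
    proof (rule ccontr)
      assume ev: "\<not> odd (card C)"
      obtain x where x: "x \<in> C" using comps_ne[OF C] by blast
      have CX: "C \<subseteq> X" using comps_sub[OF C] .
      have xS: "x \<notin> S" using x CX unfolding X_def by blast
      have xV: "x \<in> V" using x CX unfolding X_def by blast
      have finC: "finite C" using finite_subset[OF CX finX] .
      have e1: "card (oc A (X - {x})) = card (oc A (C - {x})) + card (oc A (X - C))"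
        using oc_split[OF symA finX C, of "{x}"] x by simp
      have e2: "card (oc A X) = card (oc A (X - C))"
        using oc_remove[OF symA finX C] ev by simp
      have "odd (card (C - {x}))"
      proof -
        have "card (C - {x}) = card C - 1" using x finC by simp
        moreover have "card C > 0" using x finC by (auto simp: card_gt_0_iff)
        ultimately show ?thesis using ev by simp
      qed
      then have "odd (card (oc A (C - {x})))" using parity_oc[OF symA, of "C - {x}"] finC by simp
      then have "card (oc A (C - {x})) \<noteq> 0" by (intro notI) simp
      then have e3: "card (oc A (C - {x})) \<ge> 1" by simp
      have e4: "V - (S \<union> {x}) = X - {x}" unfolding X_def by blast
      have e5: "card (S \<union> {x}) = card S + 1" using xS finS by simp
      have e6: "card (oc A X) = card S" using ocS unfolding X_def .
      have "card (oc A (V - (S \<union> {x}))) = card (oc A (X - {x}))" using e4 by simp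
      then have "card (oc A (V - (S \<union> {x}))) \<ge> card (S \<union> {x})" using e1 e2 e3 e5 e6 by linarith
      then show False using nobig[of "S \<union> {x}"] SV xV xS finS by simp
    qed
    have fcrit: "\<exists>m. is_pm A (C - {x}) m" if C: "C \<in> comps A X" and x: "x \<in> C" for C x
    proof -
      have CX: "C \<subseteq> X" using comps_sub[OF C] .
      have xS: "x \<notin> S" using x CX unfolding X_def by blast
      have xV: "x \<in> V" using x CX unfolding X_def by blast
      have finC: "finite C" using finite_subset[OF CX finX] .
      have oddC: "odd (card C)" using allodd[OF C] .
      have sub: "C - {x} \<subset> V" using CX xV unfolding X_def by blast
      have lt: "card (C - {x}) < card V" using psubset_card_mono[OF fin sub] .
      have tcC: "tutte_cond A (C - {x})"
        unfolding tutte_cond_def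
      proof (intro allI impI)
        fix T assume T: "T \<subseteq> C - {x}"
        show "card (oc A (C - {x} - T)) \<le> card T"
        proof (rule ccontr)
          assume bad: "\<not> card (oc A (C - {x} - T)) \<le> card T"
          have finT: "finite T" using T finC by (meson finite_Diff finite_subset)
          have cCxT: "card (C - {x} - T) + card T + 1 = card C"
          proof -
            have "card (C - {x} - T) = card (C - {x}) - card T"
              using T finT by (simp add: card_Diff_subset)
            moreover have "card (C - {x}) = card C - 1" using x finC by simp
            moreover have "card T \<le> card (C - {x})" using T finC by (simp add: card_mono)
            moreover have "card C \<ge> 1" using x finC by (auto simp: card_gt_0_iff Suc_le_eq)
            ultimately show ?thesis by linarith
          qed
          have iff: "odd (card (C - {x} - T)) \<longleftrightarrow> odd (card (oc A (C - {x} - T)))"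
            using parity_oc[OF symA, of "C - {x} - T"] finC by simp
          have "even (card (oc A (C - {x} - T)) + card T)"
            using cCxT oddC iff by presburger
          then have big: "card (oc A (C - {x} - T)) \<ge> card T + 2"
            using bad by presburger
          define S' where "S' = S \<union> ({x} \<union> T)"
          have xT: "{x} \<union> T \<subseteq> C" using T x by blast
          have "card (oc A (X - ({x} \<union> T))) = card (oc A (C - ({x} \<union> T))) + card (oc A (X - C))"
            using oc_split[OF symA finX C xT] .
          moreover have "C - ({x} \<union> T) = C - {x} - T" by blast
          moreover have "card (oc A X) = card (oc A (X - C)) + 1"
            using oc_remove[OF symA finX C] oddC by simp
          moreover have "X - ({x} \<union> T) = V - S'" unfolding X_def S'_def by blast
          moreover have "card S' = card S + 1 + card T"
          proof -
            have "S \<inter> ({x} \<union> T) = {}" using xT CX unfolding X_def by blast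
            then have "card S' = card S + card ({x} \<union> T)" unfolding S'_def
              by (intro card_Un_disjoint) (use finS finT in auto)
            moreover have "card ({x} \<union> T) = 1 + card T"
            proof -
              have "x \<notin> T" using T by blast
              then show ?thesis using finT by simp
            qed
            ultimately show ?thesis by simp
          qed
          moreover have "card (oc A X) = card S" using ocS unfolding X_def .
          ultimately have "card (oc A (V - S')) \<ge> card S'" using big by simp
          moreover have "S' \<subseteq> V" unfolding S'_def using SV xT CX unfolding X_def by blast
          moreover have "card S' > card S" using \<open>card S' = card S + 1 + card T\<close> by simp
          ultimately show False using nobig by blast
        qed
      qed
      show ?thesis using less.hyps[OF lt _ symA tcC] finC by simp
    qed
    define I where "I = comps A X"
    define F where "F C = {s \<in> S. \<exists>y\<in>C. (y, s) \<in> A}" for C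
    have finI: "finite I" unfolding I_def using finite_comps[OF finX] .
    have hallc: "\<forall>K\<subseteq>I. card K \<le> card (\<Union>(F ` K))"
    proof (intro allI impI)
      fix K assume K: "K \<subseteq> I"
      define T where "T = \<Union>(F ` K)"
      have TS: "T \<subseteq> S" unfolding T_def F_def by blast
      have Koc: "K \<subseteq> oc A (V - T)"
      proof
        fix C assume CK: "C \<in> K"
        then have C: "C \<in> comps A X" using K unfolding I_def by blast
        have CX: "C \<subseteq> X" using comps_sub[OF C] .
        obtain u where u: "u \<in> C" using comps_ne[OF C] by blast
        have cu: "vcomp A X u = C" using comps_comp_eq[OF symA C u] .
        have CVT: "C \<subseteq> V - T" using CX TS unfolding X_def by blast
        have "vcomp A (V - T) u \<subseteq> C"
        proof (rule comp_closed_sub[OF u], intro ballI impI)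
          fix y z assume y: "y \<in> C" and z: "z \<in> V - T" and yz: "(y, z) \<in> A"
          show "z \<in> C"
          proof (cases "z \<in> S")
            case True
            then have "z \<in> F C" unfolding F_def using y yz by blast
            then have "z \<in> T" unfolding T_def using CK by blast
            then show ?thesis using z by blast
          next
            case False
            then have "z \<in> X" using z unfolding X_def by blast
            then show ?thesis using comps_closed[OF C y _ yz] by blast
          qed
        qed
        moreover have "C \<subseteq> vcomp A (V - T) u"
          using comp_in_sub[of A X u "V - T"] cu CVT by simp
        ultimately have "vcomp A (V - T) u = C" by blast
        moreover have "u \<in> V - T" using u CVT by blast
        ultimately have "C \<in> comps A (V - T)" unfolding comps_def by (metis image_eqI)
        then show "C \<in> oc A (V - T)" unfolding oc_def using allodd[OF C] by blast
      qed
      have "card K \<le> card (oc A (V - T))"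
        using Koc finite_oc[of "V - T" A] fin by (simp add: card_mono)
      also have "\<dots> \<le> card T" using TS SV by (intro tc) blast
      finally show "card K \<le> card (\<Union>(F ` K))" unfolding T_def .
    qed
    have finF: "\<forall>C\<in>I. finite (F C)" unfolding F_def using finS by simp
    obtain f where f: "inj_on f I" "\<forall>C\<in>I. f C \<in> F C"
      using hall[OF finI finF hallc] by blast
    have IS: "card I = card S"
    proof -
      have "I = oc A X" unfolding I_def oc_def using allodd by blast
      then show ?thesis using ocS unfolding X_def by simp
    qed
    have fIS: "f ` I = S"
    proof (rule card_subset_eq[OF finS])
      show "f ` I \<subseteq> S" using f(2) unfolding F_def by blast
      show "card (f ` I) = card S" using card_image[OF f(1)] IS by simp
    qed
    have "\<forall>C\<in>I. \<exists>y. y \<in> C \<and> (y, f C) \<in> A" using f(2) unfolding F_def by blast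
    from bchoice[OF this] obtain xc where xc: "\<forall>C\<in>I. xc C \<in> C \<and> (xc C, f C) \<in> A" by blast
    have "\<forall>C\<in>I. \<exists>m. is_pm A (C - {xc C}) m" using fcrit xc unfolding I_def by blast
    from bchoice[OF this] obtain mc where mc: "\<forall>C\<in>I. is_pm A (C - {xc C}) (mc C)" by blast
    define g where "g = inv_into I f"
    define cmp where "cmp v = vcomp A X v" for v
    have gS: "g s \<in> I" "f (g s) = s" if "s \<in> S" for s
      using that fIS unfolding g_def by (auto intro: inv_into_into f_inv_into_f)
    have gf: "g (f C) = C" if "C \<in> I" for C
      unfolding g_def using inv_into_f_f[OF f(1) that] .
    have cmpI: "cmp v \<in> I" "v \<in> cmp v" if "v \<in> X" for v
      unfolding cmp_def I_def comps_def using that comp_self[of v A X] by blast+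
    have cmpC: "cmp v = C" if "C \<in> I" "v \<in> C" for v C
      unfolding cmp_def using comps_comp_eq[OF symA _ that(2)] that(1) unfolding I_def by blast
    have CsubX: "C \<subseteq> X" if "C \<in> I" for C using comps_sub that unfolding I_def by blast
    define m where "m v = (if v \<in> S then xc (g v) else if v = xc (cmp v) then f (cmp v) else mc (cmp v) v)" for v
    have m1: "m v = xc (g v)" if "v \<in> S" for v
      unfolding m_def using that by (rule if_P)
    have m2: "m v = f (cmp v)" if "v \<notin> S" "v = xc (cmp v)" for v
      unfolding m_def by (subst if_not_P[OF that(1)], rule if_P[OF that(2)])
    have m3: "m v = mc (cmp v) v" if "v \<notin> S" "v \<noteq> xc (cmp v)" for v
      unfolding m_def by (subst if_not_P[OF that(1)], rule if_not_P[OF that(2)])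
    have "is_pm A V m"
      unfolding is_pm_def
    proof (intro ballI)
      fix v assume vV: "v \<in> V"
      show "m v \<in> V \<and> m v \<noteq> v \<and> m (m v) = v \<and> (v, m v) \<in> A"
      proof (cases "v \<in> S")
        case True
        obtain C where C: "C = g v" by blast
        have CI: "C \<in> I" and fC: "f C = v" using gS[OF True] C by auto
        have mv: "m v = xc C" using m1[OF True] C by simp
        have xcC: "xc C \<in> C" "(xc C, f C) \<in> A" using xc CI by auto
        have xX: "xc C \<in> X" using CsubX[OF CI] xcC(1) by blast
        then have xnS: "xc C \<notin> S" unfolding X_def by blast
        have c2: "cmp (xc C) = C" using cmpC[OF CI xcC(1)] .
        have "xc C = xc (cmp (xc C))" using c2 by simp
        then have "m (xc C) = f (cmp (xc C))" using m2[OF xnS] by blast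
        then have mm: "m (xc C) = v" using c2 fC by simp
        have adj: "(v, xc C) \<in> A" using symD[OF symA xcC(2)] fC by simp
        have "xc C \<in> V" using xX unfolding X_def by blast
        moreover have "xc C \<noteq> v" using xnS True by blast
        ultimately show ?thesis using mv mm adj by simp
      next
        case False
        then have vX: "v \<in> X" using vV unfolding X_def by blast
        obtain C where C: "C = cmp v" by blast
        have CI: "C \<in> I" and vC: "v \<in> C" using cmpI[OF vX] C by auto
        show ?thesis
        proof (cases "v = xc C")
          case True
          have vx: "v = xc (cmp v)" using True C by simp
          have mv: "m v = f C" using m2[OF False vx] C by simp
          have fS: "f C \<in> S" using f(2) CI unfolding F_def by blast
          have "m (f C) = xc (g (f C))" using m1[OF fS] .
          then have mm: "m (f C) = v" using gf[OF CI] True by simp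
          have adj: "(v, f C) \<in> A" using xc CI True by auto
          have "f C \<in> V" using fS SV by blast
          moreover have "f C \<noteq> v" using fS False by blast
          ultimately show ?thesis using mv mm adj by simp
        next
          case nx: False
          have vx: "v \<noteq> xc (cmp v)" using nx C by simp
          have mv: "m v = mc C v" using m3[OF False vx] C by simp
          have pm: "is_pm A (C - {xc C}) (mc C)" using mc CI by blast
          have vin: "v \<in> C - {xc C}" using vC nx by blast
          have w: "mc C v \<in> C - {xc C}" "mc C v \<noteq> v" "mc C (mc C v) = v" "(v, mc C v) \<in> A"
            using pm vin unfolding is_pm_def by blast+
          have wX: "mc C v \<in> X" using w(1) CsubX[OF CI] by blast
          then have wS: "mc C v \<notin> S" unfolding X_def by blast
          have cw: "cmp (mc C v) = C" using cmpC[OF CI] w(1) by blast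
          have wx: "mc C v \<noteq> xc (cmp (mc C v))" using cw w(1) by simp
          have "m (mc C v) = mc (cmp (mc C v)) (mc C v)" using m3[OF wS wx] .
          then have mm: "m (mc C v) = v" using cw w(3) by simp
          have "mc C v \<in> V" using wX unfolding X_def by blast
          then show ?thesis using mv mm w(2,4) by simp
        qed
      qed
    qed
    then show ?thesis by blast
  qed
qed


definition gadj :: "'e set \<Rightarrow> ('e \<Rightarrow> 'v set) \<Rightarrow> ('v \<times> 'v) set" where
  "gadj E ends = {(u, w). \<exists>e\<in>E. ends e = {u, w}}"

definition ecut :: "('e \<Rightarrow> 'v set) \<Rightarrow> 'e set \<Rightarrow> 'v set \<Rightarrow> 'e set" where
  "ecut ends F X = {e \<in> F. card (ends e \<inter> X) = 1}"

lemma sym_gadj: "sym (gadj E ends)"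
  unfolding gadj_def sym_def by (auto simp: insert_commute)

lemma adj_rel_eq: "adj_rel E ends X = rel_on (gadj E ends) X"
  unfolding adj_rel_def rel_on_def gadj_def by blast

lemma components_eq: "components E ends X = comps (gadj E ends) X"
proof -
  have "components E ends X = (\<lambda>u. {w. (u, w) \<in> (adj_rel E ends X)\<^sup>*}) ` X"
    unfolding components_def by (simp add: Setcompr_eq_image)
  then show ?thesis unfolding comps_def vcomp_def adj_rel_eq by simp
qed

lemma odd_components_eq: "odd_components V E ends S = oc (gadj E ends) (V - S)"
  unfolding odd_components_def oc_def components_eq by simp

lemma mg_edge:
  assumes "multigraph V E ends" "e \<in> E"
  shows "ends e \<subseteq> V" "card (ends e) = 2" "finite (ends e)"
  using assms unfolding multigraph_def by (auto intro: card_ge_0_finite)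

lemma mg_edge2:
  assumes "multigraph V E ends" "e \<in> E"
  obtains p q where "ends e = {p, q}" "p \<noteq> q" "p \<in> V" "q \<in> V"
proof -
  have "card (ends e) = 2" "ends e \<subseteq> V" using mg_edge[OF assms] by auto
  then obtain p q where "ends e = {p, q}" "p \<noteq> q" by (auto simp: card_2_iff)
  then show ?thesis using that \<open>ends e \<subseteq> V\<close> by blast
qed

lemma degree_sum:
  assumes "finite F" "finite X"
  shows "(\<Sum>x\<in>X. degree_in F ends x) = (\<Sum>e\<in>F. card (ends e \<inter> X))"
proof -
  have "(\<Sum>x\<in>X. degree_in F ends x) = (\<Sum>x\<in>X. \<Sum>e\<in>F. (if x \<in> ends e then 1 else 0))"
  proof (rule sum.cong[OF refl])
    fix x assume "x \<in> X"
    have "degree_in F ends x = (\<Sum>e\<in>{e\<in>F. x \<in> ends e}. 1)" unfolding degree_in_def by simp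
    also have "\<dots> = (\<Sum>e\<in>F. (if x \<in> ends e then 1 else 0))"
      using sum.inter_filter[OF assms(1), of "\<lambda>_. 1::nat" "\<lambda>e. x \<in> ends e"] by simp
    finally show "degree_in F ends x = (\<Sum>e\<in>F. (if x \<in> ends e then 1 else 0))" .
  qed
  also have "\<dots> = (\<Sum>e\<in>F. \<Sum>x\<in>X. (if x \<in> ends e then 1 else 0))" by (rule sum.swap)
  also have "\<dots> = (\<Sum>e\<in>F. card (ends e \<inter> X))"
  proof (rule sum.cong[OF refl])
    fix e assume "e \<in> F"
    have "(\<Sum>x\<in>X. (if x \<in> ends e then 1 else 0)) = (\<Sum>x\<in>{x\<in>X. x \<in> ends e}. (1::nat))"
      using sum.inter_filter[OF assms(2), of "\<lambda>_. 1::nat" "\<lambda>x. x \<in> ends e"] by simp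
    also have "\<dots> = card {x\<in>X. x \<in> ends e}" by simp
    also have "{x\<in>X. x \<in> ends e} = ends e \<inter> X" by blast
    finally show "(\<Sum>x\<in>X. (if x \<in> ends e then 1 else 0)) = card (ends e \<inter> X)" .
  qed
  finally show ?thesis .
qed

lemma degree_parity:
  assumes "multigraph V E ends" "F \<subseteq> E" "finite X"
  shows "odd (\<Sum>x\<in>X. degree_in F ends x) \<longleftrightarrow> odd (card (ecut ends F X))"
proof -
  have finF: "finite F" using assms(1,2) unfolding multigraph_def by (blast intro: finite_subset)
  have le2: "card (ends e \<inter> X) \<le> 2" if "e \<in> F" for e
  proof -
    have "e \<in> E" using that assms(2) by blast
    then have "card (ends e) = 2" "finite (ends e)" using mg_edge[OF assms(1)] by auto
    then show ?thesis using card_mono[of "ends e" "ends e \<inter> X"] by simp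
  qed
  have pw: "card (ends e \<inter> X) = (if card (ends e \<inter> X) = 1 then 1 else 0) + 2 * (if card (ends e \<inter> X) = 2 then 1 else 0)"
    if "e \<in> F" for e
  proof -
    have "card (ends e \<inter> X) = 0 \<or> card (ends e \<inter> X) = 1 \<or> card (ends e \<inter> X) = 2"
      using le2[OF that] by arith
    then show ?thesis by auto
  qed
  have "(\<Sum>x\<in>X. degree_in F ends x) = (\<Sum>e\<in>F. card (ends e \<inter> X))"
    by (rule degree_sum[OF finF assms(3)])
  also have "\<dots> = (\<Sum>e\<in>F. (if card (ends e \<inter> X) = 1 then 1 else 0)) + 2 * (\<Sum>e\<in>F. (if card (ends e \<inter> X) = 2 then 1 else 0))"
    by (subst sum.cong[OF refl pw]) (simp_all add: sum.distrib sum_distrib_left)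
  also have "(\<Sum>e\<in>F. (if card (ends e \<inter> X) = 1 then 1 else 0)) = card (ecut ends F X)"
    unfolding ecut_def using sum.inter_filter[OF finF, of "\<lambda>_. 1::nat" "\<lambda>e. card (ends e \<inter> X) = 1"] by simp
  finally show ?thesis by simp
qed

lemma cut_end:
  assumes mg: "multigraph V E ends" and K: "K \<in> comps (gadj E ends) (V - S)"
    and e: "e \<in> E" "card (ends e \<inter> K) = 1"
  obtains x s where "ends e = {x, s}" "x \<in> K" "s \<in> S" "s \<in> V" "x \<noteq> s"
proof -
  obtain p q where pq: "ends e = {p, q}" "p \<noteq> q" "p \<in> V" "q \<in> V" using mg_edge2[OF mg e(1)] by blast
  have KV: "K \<subseteq> V - S" using comps_sub[OF K] .
  have cl: "z \<in> K" if "y \<in> K" "z \<in> V - S" "ends e = {y, z}" for y z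
  proof -
    have "(y, z) \<in> gadj E ends" unfolding gadj_def using e(1) that(3) by blast
    then show ?thesis using comps_closed[OF K that(1) that(2)] by blast
  qed
  have "ends e \<inter> K \<noteq> {}" using e(2) by (intro notI) simp
  then have "p \<in> K \<or> q \<in> K" using pq(1) by auto
  moreover have "\<not> (p \<in> K \<and> q \<in> K)"
  proof
    assume "p \<in> K \<and> q \<in> K"
    then have "ends e \<inter> K = {p, q}" using pq by blast
    then show False using e(2) pq(2) by simp
  qed
  ultimately show ?thesis
  proof (elim disjE)
    assume pK: "p \<in> K" and nb: "\<not> (p \<in> K \<and> q \<in> K)"
    then have qK: "q \<notin> K" by blast
    have "q \<in> S" using cl[OF pK _ pq(1)] qK pq(4) by blast
    then show ?thesis using that[OF pq(1) pK _ pq(4) pq(2)] by blast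
  next
    assume qK: "q \<in> K" and nb: "\<not> (p \<in> K \<and> q \<in> K)"
    then have pK: "p \<notin> K" by blast
    have e2: "ends e = {q, p}" using pq(1) by blast
    have "p \<in> S" using cl[OF qK _ e2] pK pq(3) by blast
    then show ?thesis using that[OF e2 qK _ pq(3)] pq(2) by blast
  qed
qed

lemma cut_disj:
  assumes mg: "multigraph V E ends"
    and K: "K \<in> comps (gadj E ends) (V - S)" and K': "K' \<in> comps (gadj E ends) (V - S)"
    and e: "e \<in> E" "card (ends e \<inter> K) = 1" "card (ends e \<inter> K') = 1"
  shows "K = K'"
proof -
  obtain x s where xs: "ends e = {x, s}" "x \<in> K" "s \<in> S" using cut_end[OF mg K e(1,2)] by blast
  have "ends e \<inter> K' \<noteq> {}" using e(3) by (intro notI) simp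
  then obtain y where y: "y \<in> ends e" "y \<in> K'" by blast
  have "K' \<subseteq> V - S" using comps_sub[OF K'] .
  then have "y \<noteq> s" using y xs by blast
  then have "y = x" using y xs by blast
  then have "K \<inter> K' \<noteq> {}" using xs y by blast
  then show ?thesis using comps_disj[OF sym_gadj K K'] by blast
qed

lemma card1_eq:
  assumes "card {e \<in> F. P e} = 1" "e1 \<in> F" "P e1" "e2 \<in> F" "P e2"
  shows "e1 = e2"
proof -
  obtain z where z: "{e \<in> F. P e} = {z}" using assms(1) card_1_singletonE by blast
  have "e1 \<in> {e \<in> F. P e}" "e2 \<in> {e \<in> F. P e}" using assms by simp_all
  then show ?thesis unfolding z by simp
qed

lemma tight:
  assumes mg: "multigraph V E ends" and bar: "barrier V E ends B"
    and J: "J \<in> odd_components V E ends B" and F: "F \<subseteq> E" and vJ: "v \<in> J"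
    and deg1: "\<forall>w\<in>V. w \<noteq> v \<longrightarrow> degree_in F ends w = 1"
    and degv: "odd (degree_in F ends v)"
  shows "card (ecut ends F J) = 1"
proof -
  define OC where "OC = oc (gadj E ends) (V - B)"
  have BV: "B \<subseteq> V" and cOB: "card OC = card B"
    using bar unfolding barrier_def OC_def odd_components_eq by auto
  have finV: "finite V" and finE: "finite E" using mg unfolding multigraph_def by auto
  have finF: "finite F" using finite_subset[OF F finE] .
  have finB: "finite B" using finite_subset[OF BV finV] .
  have JO: "J \<in> OC" using J unfolding OC_def odd_components_eq .
  have finO: "finite OC" unfolding OC_def using finite_oc[of "V - B"] finV by simp
  have KO: "K \<in> comps (gadj E ends) (V - B)" "odd (card K)" if "K \<in> OC" for K
    using that unfolding OC_def oc_def by auto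
  have KV: "K \<subseteq> V - B" if "K \<in> OC" for K using comps_sub[OF KO(1)[OF that]] .
  have Kfin: "finite K" if "K \<in> OC" for K using KV[OF that] finV by (meson finite_Diff finite_subset)
  have vV: "v \<in> V" and vB: "v \<notin> B" using KV[OF JO] vJ by auto
  have oddcut: "odd (card (ecut ends F K))" if KO': "K \<in> OC" for K
  proof -
    have d1: "(\<Sum>x\<in>K - {v}. degree_in F ends x) = card (K - {v})"
    proof -
      have "(\<Sum>x\<in>K - {v}. degree_in F ends x) = (\<Sum>x\<in>K - {v}. 1)"
        using deg1 KV[OF KO'] by (intro sum.cong) auto
      then show ?thesis by simp
    qed
    have "odd (\<Sum>x\<in>K. degree_in F ends x)"
    proof (cases "v \<in> K")
      case True
      have "(\<Sum>x\<in>K. degree_in F ends x) = degree_in F ends v + (\<Sum>x\<in>K - {v}. degree_in F ends x)"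
        using sum.remove[OF Kfin[OF KO'] True] .
      moreover have "card (K - {v}) = card K - 1" using True Kfin[OF KO'] by simp
      moreover have "card K > 0" using True Kfin[OF KO'] by (auto simp: card_gt_0_iff)
      ultimately show ?thesis using d1 degv KO(2)[OF KO'] by simp
    next
      case False
      then have "K - {v} = K" by simp
      then show ?thesis using d1 KO(2)[OF KO'] by simp
    qed
    then show ?thesis using degree_parity[OF mg F Kfin[OF KO']] by simp
  qed
  have cutge: "card (ecut ends F K) \<ge> 1" if "K \<in> OC" for K
  proof -
    have "card (ecut ends F K) \<noteq> 0" using oddcut[OF that] by (intro notI) simp
    then show ?thesis by simp
  qed
  define U where "U = \<Union>(ecut ends F ` OC)"
  have finU: "\<forall>K\<in>OC. finite (ecut ends F K)" unfolding ecut_def using finF by simp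
  have cU: "card U = (\<Sum>K\<in>OC. card (ecut ends F K))"
    unfolding U_def
  proof (rule card_UN_disjoint[OF finO finU], intro ballI impI)
    fix K K' assume K: "K \<in> OC" and K': "K' \<in> OC" and ne: "K \<noteq> K'"
    show "ecut ends F K \<inter> ecut ends F K' = {}"
    proof (rule ccontr)
      assume "ecut ends F K \<inter> ecut ends F K' \<noteq> {}"
      then obtain e where e: "e \<in> F" "card (ends e \<inter> K) = 1" "card (ends e \<inter> K') = 1"
        unfolding ecut_def by blast
      have "e \<in> E" using e(1) F by blast
      then have "K = K'" using cut_disj[OF mg KO(1)[OF K] KO(1)[OF K'] _ e(2,3)] by blast
      then show False using ne by simp
    qed
  qed
  define h where "h e = (SOME b. b \<in> ends e \<and> b \<in> B)" for e
  have hU: "h e \<in> ends e \<and> h e \<in> B \<and> e \<in> F" if eU: "e \<in> U" for e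
  proof -
    obtain K where K: "K \<in> OC" "e \<in> ecut ends F K" using eU unfolding U_def by blast
    then have eF: "e \<in> F" and c1: "card (ends e \<inter> K) = 1" unfolding ecut_def by auto
    have eE: "e \<in> E" using eF F by blast
    obtain x s where "ends e = {x, s}" "s \<in> B" using cut_end[OF mg KO(1)[OF K(1)] eE c1] by blast
    then have "\<exists>b. b \<in> ends e \<and> b \<in> B" by blast
    then have "h e \<in> ends e \<and> h e \<in> B" unfolding h_def by (rule someI_ex)
    then show ?thesis using eF by blast
  qed
  have inj: "inj_on h U"
  proof (rule inj_onI)
    fix e1 e2 assume e1: "e1 \<in> U" and e2: "e2 \<in> U" and eq: "h e1 = h e2"
    define b where "b = h e1"
    have b: "b \<in> B" "b \<in> ends e1" "b \<in> ends e2" "e1 \<in> F" "e2 \<in> F"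
      using hU[OF e1] hU[OF e2] eq unfolding b_def by auto
    have "b \<in> V" "b \<noteq> v" using b(1) BV vB by auto
    then have "degree_in F ends b = 1" using deg1 by blast
    then have "card {e \<in> F. b \<in> ends e} = 1" unfolding degree_in_def .
    then show "e1 = e2" using card1_eq[of F "\<lambda>e. b \<in> ends e" e1 e2] b by blast
  qed
  have "h ` U \<subseteq> B" using hU by blast
  then have "card U \<le> card B" using card_inj_on_le[OF inj _ finB] by blast
  then have sle: "(\<Sum>K\<in>OC. card (ecut ends F K)) \<le> card OC" using cU cOB by simp
  have "(\<Sum>K\<in>OC. card (ecut ends F K)) = (\<Sum>K\<in>OC. (card (ecut ends F K) - 1 + 1))"
  proof (rule sum.cong[OF refl])
    fix K assume "K \<in> OC"
    then have "card (ecut ends F K) \<ge> 1" by (rule cutge)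
    then show "card (ecut ends F K) = card (ecut ends F K) - 1 + 1" by simp
  qed
  also have "\<dots> = (\<Sum>K\<in>OC. (card (ecut ends F K) - 1)) + (\<Sum>K\<in>OC. 1)" by (rule sum.distrib)
  finally have "(\<Sum>K\<in>OC. (card (ecut ends F K) - 1)) = 0" using sle by simp
  then have "\<forall>K\<in>OC. card (ecut ends F K) - 1 = 0" using finO by simp
  then have "card (ecut ends F J) \<le> 1" using JO by auto
  then show ?thesis using cutge[OF JO] by simp
qed

lemma cubic_even:
  assumes cub: "cubic V E ends"
  shows "even (card V)"
proof -
  have mg: "multigraph V E ends" using cub unfolding cubic_def by blast
  have finV: "finite V" and finE: "finite E" using mg unfolding multigraph_def by auto
  have "(\<Sum>x\<in>V. degree_in E ends x) = (\<Sum>x\<in>V. 3)"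
    using cub unfolding cubic_def by (intro sum.cong) auto
  moreover have "(\<Sum>x\<in>V. degree_in E ends x) = (\<Sum>e\<in>E. card (ends e \<inter> V))"
    by (rule degree_sum[OF finE finV])
  moreover have "(\<Sum>e\<in>E. card (ends e \<inter> V)) = (\<Sum>e\<in>E. 2)"
  proof (rule sum.cong[OF refl])
    fix e assume "e \<in> E"
    then have "ends e \<subseteq> V" "card (ends e) = 2" using mg_edge[OF mg] by auto
    then show "card (ends e \<inter> V) = 2" by (simp add: Int_absorb2)
  qed
  ultimately have "3 * card V = 2 * card E" by simp
  then show ?thesis by presburger
qed

lemma petersen_tutte:
  assumes cub: "cubic V E ends" and tc3: "three_connected V E ends"
    and e0: "e0 \<in> E" "ends e0 = {a, b}"
  shows "tutte_cond (gadj E ends) (V - {a, b})"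
  unfolding tutte_cond_def
proof (intro allI impI)
  let ?A = "gadj E ends"
  have mg: "multigraph V E ends" using cub unfolding cubic_def by blast
  have finV: "finite V" and finE: "finite E" using mg unfolding multigraph_def by auto
  have deg3: "degree_in E ends x = 3" if "x \<in> V" for x using cub that unfolding cubic_def by blast
  have ab: "a \<noteq> b" "a \<in> V" "b \<in> V" using mg_edge[OF mg e0(1)] e0(2) by (auto simp: card_2_iff)
  have evenV: "even (card V)" by (rule cubic_even[OF cub])
  fix S assume S: "S \<subseteq> V - {a, b}"
  show "card (oc ?A (V - {a, b} - S)) \<le> card S"
  proof (rule ccontr)
    assume bad: "\<not> card (oc ?A (V - {a, b} - S)) \<le> card S"
    define S2 where "S2 = S \<union> {a, b}"
    have S2V: "S2 \<subseteq> V" unfolding S2_def using S ab by blast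
    have finS: "finite S" using S finV by (meson finite_Diff finite_subset)
    have finS2: "finite S2" using finite_subset[OF S2V finV] .
    have eqV: "V - {a, b} - S = V - S2" unfolding S2_def by blast
    have cS2: "card S2 = card S + 2"
    proof -
      have "a \<notin> S" "b \<notin> S" using S by auto
      then show ?thesis unfolding S2_def using finS ab(1) by (simp add: insert_commute)
    qed
    define OC where "OC = oc ?A (V - S2)"
    have cVS2: "card (V - S2) = card V - card S2" using card_Diff_subset[OF finS2 S2V] .
    have le: "card S2 \<le> card V" using card_mono[OF finV S2V] .
    have par: "odd (card (V - S2)) \<longleftrightarrow> odd (card OC)"
      unfolding OC_def using parity_oc[OF sym_gadj, of "V - S2" E ends] finV by simp
    have gt: "card OC > card S" using bad eqV unfolding OC_def by simp
    have bigOC: "card OC \<ge> card S2"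
    proof -
      have "\<And>v s2 oc s::nat. (odd (v - s2) \<longleftrightarrow> odd oc) \<Longrightarrow> s2 \<le> v \<Longrightarrow> even v \<Longrightarrow> oc > s \<Longrightarrow> s2 = s + 2 \<Longrightarrow> oc \<ge> s2"
        by presburger
      then show ?thesis using par[unfolded cVS2] le evenV gt cS2 by blast
    qed
    have finOC: "finite OC" unfolding OC_def using finite_oc[of "V - S2"] finV by simp
    have KO: "K \<in> comps ?A (V - S2)" "odd (card K)" if "K \<in> OC" for K
      using that unfolding OC_def oc_def by auto
    have KV: "K \<subseteq> V - S2" if "K \<in> OC" for K using comps_sub[OF KO(1)[OF that]] .
    have Kfin: "finite K" if "K \<in> OC" for K using KV[OF that] finV by (meson finite_Diff finite_subset)
    have cut3: "card (ecut ends E K) \<ge> 3" if KOC: "K \<in> OC" for K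
    proof -
      have "(\<Sum>x\<in>K. degree_in E ends x) = (\<Sum>x\<in>K. 3)"
        using deg3 KV[OF KOC] by (intro sum.cong) auto
      then have "odd (\<Sum>x\<in>K. degree_in E ends x)" using KO(2)[OF KOC] by simp
      then have oddc: "odd (card (ecut ends E K))"
        using degree_parity[OF mg subset_refl Kfin[OF KOC]] by simp
      have not1: "card (ecut ends E K) \<noteq> 1"
      proof
        assume c1: "card (ecut ends E K) = 1"
        then obtain e where eK: "ecut ends E K = {e}" using card_1_singletonE by blast
        then have eE: "e \<in> E" and ce: "card (ends e \<inter> K) = 1" unfolding ecut_def by auto
        obtain x s where xs: "ends e = {x, s}" "x \<in> K" "s \<in> S2" "s \<in> V" "x \<noteq> s"
          using cut_end[OF mg KO(1)[OF KOC] eE ce] by blast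
        define t where "t = (if s = a then b else a)"
        have t: "t \<in> S2" "t \<noteq> s" "t \<in> V" unfolding t_def S2_def using ab by auto
        have "connected_graph (V - {s}) E ends"
          using tc3 xs(4) unfolding three_connected_def by auto
        then have c1': "card (comps ?A (V - {s})) = 1"
          unfolding connected_graph_def components_eq .
        have xV: "x \<in> V - {s}" using xs KV[OF KOC] by blast
        have tV: "t \<in> V - {s}" using t by blast
        have "vcomp ?A (V - {s}) x \<in> comps ?A (V - {s})" "vcomp ?A (V - {s}) t \<in> comps ?A (V - {s})"
          unfolding comps_def using xV tV by auto
        then have same: "vcomp ?A (V - {s}) x = vcomp ?A (V - {s}) t"
          using c1' by (metis card_1_singletonE singletonD)
        have "vcomp ?A (V - {s}) x \<subseteq> K"
        proof (rule comp_closed_sub[OF xs(2)], intro ballI impI)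
          fix y z assume y: "y \<in> K" and z: "z \<in> V - {s}" and yz: "(y, z) \<in> ?A"
          show "z \<in> K"
          proof (rule ccontr)
            assume zK: "z \<notin> K"
            obtain e' where e': "e' \<in> E" "ends e' = {y, z}" using yz unfolding gadj_def by blast
            have "ends e' \<inter> K = {y}" using e'(2) y zK by blast
            then have "e' \<in> ecut ends E K" unfolding ecut_def using e'(1) by simp
            then have "e' = e" using eK by blast
            then have "z \<in> {x, s}" using e'(2) xs(1) by blast
            then show False using z zK xs(2) by blast
          qed
        qed
        then have "t \<in> K" using same comp_self[of t ?A "V - {s}"] by blast
        then show False using KV[OF KOC] t(1) by blast
      qed
      have "card (ecut ends E K) \<noteq> 0" using oddc by (intro notI) simp
      moreover have "\<And>n::nat. n \<noteq> 0 \<Longrightarrow> odd n \<Longrightarrow> n \<noteq> 1 \<Longrightarrow> 3 \<le> n" by presburger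
      ultimately show ?thesis using oddc not1 by blast
    qed
    define U where "U = \<Union>(ecut ends E ` OC)"
    have finU: "\<forall>K\<in>OC. finite (ecut ends E K)" unfolding ecut_def using finE by simp
    have cU: "card U = (\<Sum>K\<in>OC. card (ecut ends E K))"
      unfolding U_def
    proof (rule card_UN_disjoint[OF finOC finU], intro ballI impI)
      fix K K' assume K: "K \<in> OC" and K': "K' \<in> OC" and ne: "K \<noteq> K'"
      show "ecut ends E K \<inter> ecut ends E K' = {}"
      proof (rule ccontr)
        assume "ecut ends E K \<inter> ecut ends E K' \<noteq> {}"
        then obtain e where e: "e \<in> E" "card (ends e \<inter> K) = 1" "card (ends e \<inter> K') = 1"
          unfolding ecut_def by blast
        then have "K = K'" using cut_disj[OF mg KO(1)[OF K] KO(1)[OF K'] e] by blast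
        then show False using ne by simp
      qed
    qed
    have "(\<Sum>K\<in>OC. 3) \<le> (\<Sum>K\<in>OC. card (ecut ends E K))"
      using cut3 by (intro sum_mono) auto
    then have Ubig: "card U \<ge> 3 * card S2" using cU bigOC by simp
    define D where "D = ecut ends E S2"
    have UD: "U \<subseteq> D"
    proof
      fix e assume "e \<in> U"
      then obtain K where K: "K \<in> OC" "e \<in> ecut ends E K" unfolding U_def by blast
      then have eE: "e \<in> E" and ce: "card (ends e \<inter> K) = 1" unfolding ecut_def by auto
      obtain x s where xs: "ends e = {x, s}" "x \<in> K" "s \<in> S2"
        using cut_end[OF mg KO(1)[OF K(1)] eE ce] by blast
      have "x \<notin> S2" using xs(2) KV[OF K(1)] by blast
      then have "ends e \<inter> S2 = {s}" unfolding xs(1) using xs(3) by blast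
      then show "e \<in> D" unfolding D_def ecut_def using eE by simp
    qed
    have finD: "finite D" unfolding D_def ecut_def using finE by simp
    have e0D: "e0 \<notin> D"
    proof -
      have "ends e0 \<inter> S2 = {a, b}" unfolding S2_def e0(2) by blast
      then show ?thesis unfolding D_def ecut_def using ab(1) by simp
    qed
    have "(\<Sum>x\<in>S2. degree_in E ends x) = (\<Sum>x\<in>S2. 3)"
      using deg3 S2V by (intro sum.cong) auto
    then have h1: "(\<Sum>e\<in>E. card (ends e \<inter> S2)) = 3 * card S2"
      using degree_sum[OF finE finS2, of ends] by simp
    have DE: "insert e0 D \<subseteq> E" unfolding D_def ecut_def using e0(1) by blast
    have "(\<Sum>e\<in>insert e0 D. card (ends e \<inter> S2)) \<le> (\<Sum>e\<in>E. card (ends e \<inter> S2))"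
      by (rule sum_mono2[OF finE DE]) simp
    moreover have "(\<Sum>e\<in>insert e0 D. card (ends e \<inter> S2)) = card (ends e0 \<inter> S2) + (\<Sum>e\<in>D. card (ends e \<inter> S2))"
      using finD e0D by simp
    moreover have "(\<Sum>e\<in>D. card (ends e \<inter> S2)) = (\<Sum>e\<in>D. 1)"
      unfolding D_def ecut_def by (intro sum.cong) auto
    moreover have "card (ends e0 \<inter> S2) = 2"
    proof -
      have "ends e0 \<inter> S2 = {a, b}" unfolding S2_def e0(2) by blast
      then show ?thesis using ab(1) by simp
    qed
    ultimately have "card D + 2 \<le> 3 * card S2" using h1 by simp
    moreover have "card U \<le> card D" using card_mono[OF finD UD] .
    ultimately show False using Ubig by simp
  qed
qed


lemma frag_Some:
  assumes "w \<in> J"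
  shows "Some w \<in> frag_ends ends J e \<longleftrightarrow> w \<in> ends e"
proof -
  have eq: "(Some w = (if x \<in> J then Some x else None)) = (x \<in> J \<and> x = w)" for x
    by (cases "x \<in> J") auto
  have "Some w \<in> frag_ends ends J e \<longleftrightarrow> (\<exists>x\<in>ends e. x \<in> J \<and> x = w)"
    unfolding frag_ends_def image_iff eq by (rule refl)
  also have "\<dots> \<longleftrightarrow> w \<in> ends e" using assms by auto
  finally show ?thesis .
qed

lemma frag_None: "None \<in> frag_ends ends J e \<longleftrightarrow> (\<exists>x\<in>ends e. x \<notin> J)"
proof -
  have eq: "(None = (if x \<in> J then Some x else None)) = (x \<notin> J)" for x :: 'a
    by (cases "x \<in> J") auto
  show ?thesis unfolding frag_ends_def image_iff eq by (rule refl)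
qed

lemma cut_iff:
  assumes mg: "multigraph V E ends" and e: "e \<in> E"
  shows "card (ends e \<inter> J) = 1 \<longleftrightarrow> ends e \<inter> J \<noteq> {} \<and> (\<exists>x\<in>ends e. x \<notin> J)"
proof -
  obtain p q where pq: "ends e = {p, q}" "p \<noteq> q" using mg_edge2[OF mg e] by blast
  show ?thesis
  proof (cases "p \<in> J")
    case pJ: True
    show ?thesis
    proof (cases "q \<in> J")
      case True
      then have "ends e \<inter> J = {p, q}" unfolding pq(1) using pJ by blast
      moreover have "\<not> (\<exists>x\<in>ends e. x \<notin> J)" unfolding pq(1) using pJ True by blast
      ultimately show ?thesis using pq(2) by simp
    next
      case False
      then have "ends e \<inter> J = {p}" unfolding pq(1) using pJ pq(2) by blast
      moreover have "\<exists>x\<in>ends e. x \<notin> J" unfolding pq(1) using False by blast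
      ultimately show ?thesis by simp
    qed
  next
    case pJ: False
    show ?thesis
    proof (cases "q \<in> J")
      case True
      then have "ends e \<inter> J = {q}" unfolding pq(1) using pJ pq(2) by blast
      moreover have "\<exists>x\<in>ends e. x \<notin> J" unfolding pq(1) using pJ by blast
      ultimately show ?thesis by simp
    next
      case False
      then have "ends e \<inter> J = {}" unfolding pq(1) using pJ by blast
      then show ?thesis by simp
    qed
  qed
qed

lemma forward:
  assumes mg: "multigraph V E ends" and bar: "barrier V E ends B"
    and J: "J \<in> odd_components V E ends B" and vJ: "v \<in> J"
    and F: "v_matching V E ends v F"
  shows "v_matching (frag_V J) (frag_E E ends J) (frag_ends ends J) (Some v) {e\<in>F. ends e \<inter> J \<noteq> {}}"
proof -
  have FE: "F \<subseteq> E" and deg: "\<forall>w\<in>V. degree_in F ends w = (if w = v then 3 else 1)"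
    using F unfolding v_matching_def by auto
  have "J \<in> oc (gadj E ends) (V - B)" using J by (simp add: odd_components_eq)
  then have "J \<in> comps (gadj E ends) (V - B)" by (simp add: oc_def)
  then have "J \<subseteq> V - B" by (rule comps_sub)
  then have JV: "J \<subseteq> V" by blast
  define F' where "F' = {e\<in>F. ends e \<inter> J \<noteq> {}}"
  have sub: "F' \<subseteq> frag_E E ends J" unfolding F'_def frag_E_def using FE by blast
  have dS: "degree_in F' (frag_ends ends J) (Some x) = (if Some x = Some v then 3 else 1)" if x: "x \<in> J" for x
  proof -
    have "{e \<in> F'. Some x \<in> frag_ends ends J e} = {e \<in> F. x \<in> ends e}"
    proof (rule set_eqI)
      fix e
      show "e \<in> {e \<in> F'. Some x \<in> frag_ends ends J e} \<longleftrightarrow> e \<in> {e \<in> F. x \<in> ends e}"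
        unfolding F'_def mem_Collect_eq frag_Some[OF x] using x by blast
    qed
    then have "degree_in F' (frag_ends ends J) (Some x) = degree_in F ends x"
      unfolding degree_in_def by simp
    also have "\<dots> = (if x = v then 3 else 1)" using deg x JV by blast
    finally show ?thesis by simp
  qed
  have dN: "degree_in F' (frag_ends ends J) None = 1"
  proof -
    have "{e \<in> F'. None \<in> frag_ends ends J e} = ecut ends F J"
    proof (rule set_eqI)
      fix e
      show "e \<in> {e \<in> F'. None \<in> frag_ends ends J e} \<longleftrightarrow> e \<in> ecut ends F J"
      proof (cases "e \<in> F")
        case True
        then have "e \<in> E" using FE by blast
        then show ?thesis unfolding F'_def ecut_def mem_Collect_eq frag_None cut_iff[OF mg \<open>e \<in> E\<close>]
          using True by simp
      next
        case False
        then show ?thesis unfolding F'_def ecut_def by simp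
      qed
    qed
    moreover have "card (ecut ends F J) = 1"
    proof (rule tight[OF mg bar J FE vJ])
      show "\<forall>w\<in>V. w \<noteq> v \<longrightarrow> degree_in F ends w = 1" using deg by simp
      show "odd (degree_in F ends v)" using deg vJ JV by auto
    qed
    ultimately show ?thesis unfolding degree_in_def by simp
  qed
  show ?thesis
    unfolding v_matching_def F'_def[symmetric]
  proof (intro conjI ballI sub)
    fix w assume "w \<in> frag_V J"
    show "degree_in F' (frag_ends ends J) w = (if w = Some v then 3 else 1)"
    proof (cases w)
      case None
      then show ?thesis using dN by simp
    next
      case (Some x)
      then have "x \<in> J" using \<open>w \<in> frag_V J\<close> unfolding frag_V_def by blast
      then show ?thesis using dS Some by simp
    qed
  qed
qed

lemma backward:
  assumes cub: "cubic V E ends" and tc3: "three_connected V E ends"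
    and bar: "barrier V E ends B"
    and J: "J \<in> odd_components V E ends B" and vJ: "v \<in> J"
    and F': "v_matching (frag_V J) (frag_E E ends J) (frag_ends ends J) (Some v) F'"
  shows "\<exists>F. v_matching V E ends v F"
proof -
  have mg: "multigraph V E ends" using cub unfolding cubic_def by blast
  have finV: "finite V" and finE: "finite E" using mg unfolding multigraph_def by auto
  have "J \<in> oc (gadj E ends) (V - B)" using J by (simp add: odd_components_eq)
  then have "J \<in> comps (gadj E ends) (V - B)" by (simp add: oc_def)
  then have "J \<subseteq> V - B" by (rule comps_sub)
  then have JV: "J \<subseteq> V" by blast
  have F'E: "F' \<subseteq> E" using F' unfolding v_matching_def frag_E_def by blast
  have fdeg: "degree_in F' (frag_ends ends J) w = (if w = Some v then 3 else 1)" if "w \<in> frag_V J" for w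
    using F' that unfolding v_matching_def by blast
  have "degree_in F' (frag_ends ends J) None = 1" using fdeg[of None] unfolding frag_V_def by simp
  then have "card {e \<in> F'. None \<in> frag_ends ends J e} = 1" unfolding degree_in_def .
  then obtain e0 where e0s: "{e \<in> F'. None \<in> frag_ends ends J e} = {e0}" using card_1_singletonE by blast
  then have e0F: "e0 \<in> F'" and e0N: "None \<in> frag_ends ends J e0" by auto
  have e0E: "e0 \<in> E" using e0F F'E by blast
  have e0J: "ends e0 \<inter> J \<noteq> {}" using F' e0F unfolding v_matching_def frag_E_def by blast
  have e0out: "\<exists>x\<in>ends e0. x \<notin> J" using e0N frag_None by metis
  have onlye0: "e = e0" if "e \<in> F'" "None \<in> frag_ends ends J e" for e
  proof -
    have "e \<in> {e \<in> F'. None \<in> frag_ends ends J e}" using that by simp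
    then show ?thesis unfolding e0s by simp
  qed
  obtain a b where ab: "ends e0 = {a, b}" "a \<in> J" "b \<notin> J" "a \<noteq> b" "a \<in> V" "b \<in> V"
  proof -
    obtain p q where pq: "ends e0 = {p, q}" "p \<noteq> q" "p \<in> V" "q \<in> V" using mg_edge2[OF mg e0E] by blast
    show ?thesis
    proof (cases "p \<in> J")
      case True
      then have "q \<notin> J" using e0out unfolding pq(1) by blast
      then show ?thesis using that[OF pq(1) True _ pq(2-4)] by blast
    next
      case False
      then have "q \<in> J" using e0J unfolding pq(1) by blast
      moreover have "ends e0 = {q, p}" using pq(1) by (simp add: insert_commute)
      ultimately show ?thesis using that[of q p] False pq by blast
    qed
  qed
  define V' where "V' = V - {a, b}"
  have "tutte_cond (gadj E ends) V'" unfolding V'_def by (rule petersen_tutte[OF cub tc3 e0E ab(1)])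
  then obtain m where m: "is_pm (gadj E ends) V' m"
    using tutte[of V' "gadj E ends"] finV sym_gadj unfolding V'_def by blast
  have mV: "m x \<in> V'" "m x \<noteq> x" "m (m x) = x" "(x, m x) \<in> gadj E ends" if "x \<in> V'" for x
    using m that unfolding is_pm_def by auto
  define em where "em x = (SOME e. e \<in> E \<and> ends e = {x, m x})" for x
  have em: "em x \<in> E" "ends (em x) = {x, m x}" if "x \<in> V'" for x
  proof -
    have "\<exists>e. e \<in> E \<and> ends e = {x, m x}" using mV(4)[OF that] unfolding gadj_def by blast
    then have "em x \<in> E \<and> ends (em x) = {x, m x}" unfolding em_def by (rule someI_ex)
    then show "em x \<in> E" "ends (em x) = {x, m x}" by auto
  qed
  have emsym: "em (m x) = em x" if "x \<in> V'" for x
  proof -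
    have "{m x, m (m x)} = {x, m x}" using mV(3)[OF that] by (simp add: insert_commute)
    then show ?thesis unfolding em_def by simp
  qed
  have em_has: "x = w \<or> x = m w" if "x \<in> V'" "w \<in> ends (em x)" for x w
  proof -
    have "w = x \<or> w = m x" using that em(2)[OF that(1)] by simp
    then show ?thesis using mV(3)[OF that(1)] by auto
  qed
  define M where "M = insert e0 (em ` V')"
  have ME: "M \<subseteq> E" unfolding M_def using e0E em(1) by blast
  have aV': "a \<notin> V'" "b \<notin> V'" unfolding V'_def by auto
  have degM: "degree_in M ends w = 1" if wV: "w \<in> V" for w
  proof (cases "w \<in> V'")
    case True
    have "{e \<in> M. w \<in> ends e} = {em w}"
    proof (rule set_eqI)
      fix e
      show "e \<in> {e \<in> M. w \<in> ends e} \<longleftrightarrow> e \<in> {em w}"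
      proof
        assume "e \<in> {e \<in> M. w \<in> ends e}"
        then have eM: "e \<in> M" and we: "w \<in> ends e" by auto
        show "e \<in> {em w}"
        proof (cases "e = e0")
          case True
          then have "w \<in> {a, b}" using we ab(1) by simp
          then show ?thesis using aV' \<open>w \<in> V'\<close> by blast
        next
          case False
          then obtain x where x: "x \<in> V'" "e = em x" using eM unfolding M_def by blast
          then have "x = w \<or> x = m w" using em_has[OF x(1)] we by simp
          then show ?thesis
          proof
            assume "x = w" then show ?thesis using x by simp
          next
            assume xw: "x = m w"
            have "em x = em w" using emsym[OF True] xw by simp
            then show ?thesis using x by simp
          qed
        qed
      next
        assume "e \<in> {em w}"
        then have "e = em w" by simp
        then show "e \<in> {e \<in> M. w \<in> ends e}" unfolding M_def using em(2)[OF True] True by auto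
      qed
    qed
    then show ?thesis unfolding degree_in_def by simp
  next
    case False
    then have wab: "w = a \<or> w = b" using wV unfolding V'_def by blast
    have "{e \<in> M. w \<in> ends e} = {e0}"
    proof (rule set_eqI)
      fix e
      show "e \<in> {e \<in> M. w \<in> ends e} \<longleftrightarrow> e \<in> {e0}"
      proof
        assume "e \<in> {e \<in> M. w \<in> ends e}"
        then have eM: "e \<in> M" and we: "w \<in> ends e" by auto
        show "e \<in> {e0}"
        proof (rule ccontr)
          assume "e \<notin> {e0}"
          then obtain x where x: "x \<in> V'" "e = em x" using eM unfolding M_def by blast
          then have "w = x \<or> w = m x" using em(2)[OF x(1)] we by simp
          then have "w \<in> V'" using x(1) mV(1)[OF x(1)] by blast
          then show False using False by blast
        qed
      next
        assume "e \<in> {e0}"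
        then show "e \<in> {e \<in> M. w \<in> ends e}" unfolding M_def using ab(1) wab by auto
      qed
    qed
    then show ?thesis unfolding degree_in_def by simp
  qed
  have cutM: "card (ecut ends M J) = 1"
  proof (rule tight[OF mg bar J ME vJ])
    show "\<forall>w\<in>V. w \<noteq> v \<longrightarrow> degree_in M ends w = 1" using degM by blast
    show "odd (degree_in M ends v)" using degM vJ JV by auto
  qed
  have stay: "m x \<notin> J" if x: "x \<in> V'" "x \<notin> J" for x
  proof
    assume mJ: "m x \<in> J"
    have "ends (em x) \<inter> J = {m x}" using em(2)[OF x(1)] x(2) mJ by auto
    then have c1: "em x \<in> ecut ends M J" unfolding ecut_def M_def using x(1) by auto
    have "ends e0 \<inter> J = {a}" using ab by auto
    then have c2: "e0 \<in> ecut ends M J" unfolding ecut_def M_def by simp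
    have "x \<in> ends (em x)" using em(2)[OF x(1)] by simp
    moreover have "x \<notin> ends e0" using ab(1) x(1) aV' by auto
    ultimately have ne: "em x \<noteq> e0" by blast
    obtain z where zz: "ecut ends M J = {z}" using cutM card_1_singletonE by blast
    have "em x = z" "e0 = z" using c1 c2 unfolding zz by auto
    then show False using ne by simp
  qed
  define F where "F = F' \<union> em ` (V - J - {b})"
  have subV': "V - J - {b} \<subseteq> V'" unfolding V'_def using ab(2) by blast
  have FE: "F \<subseteq> E" unfolding F_def using F'E em(1) subV' by blast
  have F'w: "e = e0" if "e \<in> F'" "w \<in> ends e" "w \<notin> J" for e w
  proof -
    have "None \<in> frag_ends ends J e" using that(2,3) frag_None by metis
    then show ?thesis using onlye0[OF that(1)] by simp
  qed
  have degF: "degree_in F ends w = (if w = v then 3 else 1)" if wV: "w \<in> V" for w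
  proof (cases "w \<in> J")
    case True
    have "{e \<in> F. w \<in> ends e} = {e \<in> F'. Some w \<in> frag_ends ends J e}"
    proof (rule set_eqI)
      fix e
      show "e \<in> {e \<in> F. w \<in> ends e} \<longleftrightarrow> e \<in> {e \<in> F'. Some w \<in> frag_ends ends J e}"
      proof
        assume "e \<in> {e \<in> F. w \<in> ends e}"
        then have eF: "e \<in> F" and we: "w \<in> ends e" by auto
        have "e \<in> F'"
        proof (rule ccontr)
          assume "e \<notin> F'"
          then obtain x where x: "x \<in> V - J - {b}" "e = em x" using eF unfolding F_def by blast
          have xV': "x \<in> V'" using x(1) subV' by blast
          have "w = x \<or> w = m x" using em(2)[OF xV'] we x(2) by simp
          moreover have "x \<notin> J" using x(1) by blast
          moreover have "m x \<notin> J" using stay[OF xV'] x(1) by blast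
          ultimately show False using True by blast
        qed
        then show "e \<in> {e \<in> F'. Some w \<in> frag_ends ends J e}" using we frag_Some[OF True, of ends e] by simp
      next
        assume "e \<in> {e \<in> F'. Some w \<in> frag_ends ends J e}"
        then show "e \<in> {e \<in> F. w \<in> ends e}" unfolding F_def using frag_Some[OF True, of ends e] by simp
      qed
    qed
    then have "degree_in F ends w = degree_in F' (frag_ends ends J) (Some w)" unfolding degree_in_def by simp
    also have "\<dots> = (if Some w = Some v then 3 else 1)" using fdeg True unfolding frag_V_def by blast
    finally show ?thesis by simp
  next
    case nJ: False
    have wv: "w \<noteq> v" using nJ vJ by blast
    show ?thesis
    proof (cases "w = b")
      case True
      have "{e \<in> F. w \<in> ends e} = {e0}"
      proof (rule set_eqI)
        fix e
        show "e \<in> {e \<in> F. w \<in> ends e} \<longleftrightarrow> e \<in> {e0}"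
        proof
          assume "e \<in> {e \<in> F. w \<in> ends e}"
          then have eF: "e \<in> F" and we: "w \<in> ends e" by auto
          show "e \<in> {e0}"
          proof (cases "e \<in> F'")
            case True
            then show ?thesis using F'w[OF True we nJ] by simp
          next
            case False
            then obtain x where x: "x \<in> V - J - {b}" "e = em x" using eF unfolding F_def by blast
            have xV': "x \<in> V'" using x(1) subV' by blast
            have "w = x \<or> w = m x" using em(2)[OF xV'] we x(2) by simp
            moreover have "x \<noteq> b" using x(1) by blast
            moreover have "m x \<noteq> b" using mV(1)[OF xV'] aV' by blast
            ultimately show ?thesis using \<open>w = b\<close> by blast
          qed
        next
          assume "e \<in> {e0}"
          then show "e \<in> {e \<in> F. w \<in> ends e}" unfolding F_def using e0F ab(1) True by auto
        qed
      qed
      then show ?thesis unfolding degree_in_def using wv by simp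
    next
      case nb: False
      have wset: "w \<in> V - J - {b}" using wV nJ nb by blast
      have wV': "w \<in> V'" using wset subV' by blast
      have "{e \<in> F. w \<in> ends e} = {em w}"
      proof (rule set_eqI)
        fix e
        show "e \<in> {e \<in> F. w \<in> ends e} \<longleftrightarrow> e \<in> {em w}"
        proof
          assume "e \<in> {e \<in> F. w \<in> ends e}"
          then have eF: "e \<in> F" and we: "w \<in> ends e" by auto
          show "e \<in> {em w}"
          proof (cases "e \<in> F'")
            case True
            then have "e = e0" using F'w[OF True we nJ] by simp
            then have "w \<in> {a, b}" using we ab(1) by simp
            then show ?thesis using wV' aV' by blast
          next
            case False
            then obtain x where x: "x \<in> V - J - {b}" "e = em x" using eF unfolding F_def by blast
            have xV': "x \<in> V'" using x(1) subV' by blast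
            have "x = w \<or> x = m w" using em_has[OF xV'] we x(2) by simp
            then show ?thesis
            proof
              assume "x = w" then show ?thesis using x by simp
            next
              assume xw: "x = m w"
              have "em x = em w" using emsym[OF wV'] xw by simp
              then show ?thesis using x by simp
            qed
          qed
        next
          assume "e \<in> {em w}"
          then have "e = em w" by simp
          then show "e \<in> {e \<in> F. w \<in> ends e}" unfolding F_def using em(2)[OF wV'] wset by auto
        qed
      qed
      then show ?thesis unfolding degree_in_def using wv by simp
    qed
  qed
  have "v_matching V E ends v F" unfolding v_matching_def using FE degF by blast
  then show ?thesis by blast
qed

theorem lemma3p4:
  fixes V :: "'v set" and E :: "'e set" and ends :: "'e \<Rightarrow> 'v set"
    and B J :: "'v set" and v :: 'v
  assumes "cubic V E ends"
    and "three_connected V E ends"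
    and "has_perfect_matching V E ends"
    and "barrier V E ends B"
    and "B \<noteq> {}"
    and "J \<in> odd_components V E ends B"
    and "v \<in> J"
  shows "lambda_matchable V E ends v \<longleftrightarrow>
         lambda_matchable (frag_V J) (frag_E E ends J) (frag_ends ends J) (Some v)"
proof -
  have mg: "multigraph V E ends" using assms(1) unfolding cubic_def by blast
  have "J \<in> oc (gadj E ends) (V - B)" using assms(6) by (simp add: odd_components_eq)
  then have "J \<in> comps (gadj E ends) (V - B)" by (simp add: oc_def)
  then have "J \<subseteq> V - B" by (rule comps_sub)
  then have vV: "v \<in> V" using assms(7) by blast
  have sv: "Some v \<in> frag_V J" unfolding frag_V_def using assms(7) by blast
  show ?thesis
  proof
    assume "lambda_matchable V E ends v"
    then obtain F where "v_matching V E ends v F" unfolding lambda_matchable_def by blast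
    then have "v_matching (frag_V J) (frag_E E ends J) (frag_ends ends J) (Some v) {e\<in>F. ends e \<inter> J \<noteq> {}}"
      by (rule forward[OF mg assms(4) assms(6) assms(7)])
    then show "lambda_matchable (frag_V J) (frag_E E ends J) (frag_ends ends J) (Some v)"
      unfolding lambda_matchable_def using sv by blast
  next
    assume "lambda_matchable (frag_V J) (frag_E E ends J) (frag_ends ends J) (Some v)"
    then obtain F' where "v_matching (frag_V J) (frag_E E ends J) (frag_ends ends J) (Some v) F'"
      unfolding lambda_matchable_def by blast
    then have "\<exists>F. v_matching V E ends v F"
      by (rule backward[OF assms(1) assms(2) assms(4) assms(6) assms(7)])
    then show "lambda_matchable V E ends v" unfolding lambda_matchable_def using vV by blast
  qed
qed

end
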